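(* Let $G$ be Boidol's group and consider the coadjoint orbit space $\mathfrak{g}^*/G$ with its quotient topology, partitioned into the sets $\Gamma_3,\Gamma_2,\Gamma_1,\Gamma_0$ described in the context. Then: (i) the relative topology of $\mathfrak{g}^*/G$ on $\Gamma_3$ is Hausdorff; (ii) each of the four subsets $\Gamma_{2,\varepsilon,\sigma}$, $\varepsilon,\sigma\in\{+,-\}$, is open in $\Gamma_2$ and Hausdorff in its relative topology; (iii) $\Gamma_1$ is discrete in its relative topology; (iv) $\Gamma_0$ is homeomorphic to $\mathbb{R}$ (via $\tau\mapsto\{\tau T^*\}$).
   Context: Boidol's group $G$ is the simply connected Lie group with Lie algebra $\mathfrak{g}$ having basis $T,X,Y,Z$ and non-trivial brackets $[T,X]=-X$, $[T,Y]=Y$, $[X,Y]=Z$; concretely $G=\mathbb{R}^4$ with product $(t,x,y,z)\cdot(t',x',y',z')=(t+t',\,e^{t'}x+x',\,e^{-t'}y+y',\,z+z'+\tfrac12(e^{t'}xy'-e^{-t'}x'y))$. Write elements of $\mathfrak{g}^*$ as $aT^*+bX^*+cY^*+dZ^*$ (dual basis). $G$ acts on $\mathfrak{g}^*$ by the coadjoint action, and the coadjoint orbits are exactly: (1) for $\rho\in\mathbb{R},\lambda\in\mathbb{R}\setminus\{0\}$: $O_{\rho,\lambda}=\{\frac{\rho\lambda+xy}{\lambda}T^*+xX^*+yY^*+\lambda Z^*: x,y\in\mathbb{R}\}$; (2) for $(\alpha,\beta)\in\mathbb{R}^2\setminus\{0\}$: $O_{\alpha,\beta,0}=\{uT^*+e^t\alpha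 X^*+e^{-t}\beta Y^*: t,u\in\mathbb{R}\}$; (3) for $\tau\in\mathbb{R}$ the singletons $\{\tau T^*\}$. Set $\Gamma_3=\{O_{\rho,\lambda}:\rho\in\mathbb{R},\lambda\neq0\}$; for $\varepsilon,\sigma\in\{+,-\}$ (identified with $\pm1$), $\Gamma_{2,\varepsilon,\sigma}=\{O_{\varepsilon\rho,\sigma,0}:\rho>0\}$ and $\Gamma_2=\bigcup_{\varepsilon,\sigma}\Gamma_{2,\varepsilon,\sigma}$ (the orbits $O_{\alpha,\beta,0}$ with $\alpha\beta\neq0$); $\Gamma_1=\{O_{1,0,0},O_{-1,0,0},O_{0,1,0},O_{0,-1,0}\}$; $\Gamma_0=\{\{\tau T^*\}:\tau\in\mathbb{R}\}$. The orbit space $\mathfrak{g}^*/G$ carries the quotient topology of $\mathfrak{g}^*$. *)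

theory Defs
  imports "HOL-Analysis.Analysis"
begin

definition quotient_topology :: "'a topology \<Rightarrow> ('a \<Rightarrow> 'b) \<Rightarrow> 'b topology" where
  "quotient_topology X f =
     topology (\<lambda>U. U \<subseteq> f ` topspace X \<and> openin X {x \<in> topspace X. f x \<in> U})"

lemma istopology_quotient_topology:
  "istopology (\<lambda>U. U \<subseteq> f ` topspace X \<and> openin X {x \<in> topspace X. f x \<in> U})"
  unfolding istopology_def
proof (rule conjI; intro allI impI)
  fix S T assume S: "S \<subseteq> f ` topspace X \<and> openin X {x \<in> topspace X. f x \<in> S}"
    and T: "T \<subseteq> f ` topspace X \<and> openin X {x \<in> topspace X. f x \<in> T}"
  have e: "{x \<in> topspace X. f x \<in> S \<inter> T} = {x \<in> topspace X. f x \<in> S} \<inter> {x \<in> topspace X. f x \<in> T}" by auto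
  have "openin X ({x \<in> topspace X. f x \<in> S} \<inter> {x \<in> topspace X. f x \<in> T})"
    using S T by (intro openin_Int) auto
  with S T e show "S \<inter> T \<subseteq> f ` topspace X \<and> openin X {x \<in> topspace X. f x \<in> S \<inter> T}"
    by (metis le_infI1)
next
  fix K assume K: "\<forall>S\<in>K. S \<subseteq> f ` topspace X \<and> openin X {x \<in> topspace X. f x \<in> S}"
  then have "openin X (\<Union>S\<in>K. {x \<in> topspace X. f x \<in> S})" by (intro openin_Union) auto
  moreover have "(\<Union>S\<in>K. {x \<in> topspace X. f x \<in> S}) = {x \<in> topspace X. f x \<in> \<Union>K}" by auto
  ultimately show "\<Union>K \<subseteq> f ` topspace X \<and> openin X {x \<in> topspace X. f x \<in> \<Union>K}" using K by auto
qed

lemma openin_quotient_topology: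
  "openin (quotient_topology X f) U \<longleftrightarrow>
     U \<subseteq> f ` topspace X \<and> openin X {x \<in> topspace X. f x \<in> U}"
  unfolding quotient_topology_def by (simp add: topology_inverse'[OF istopology_quotient_topology])

text \<open>Elements of the dual g* written as (a,b,c,d) = a T* + b X* + c Y* + d Z*.\<close>
type_synonym gdual = "real \<times> real \<times> real \<times> real"

definition orbit3 :: "real \<Rightarrow> real \<Rightarrow> gdual set" where
  "orbit3 \<rho> lam = {((\<rho> * lam + x * y) / lam, x, y, lam) | x y. True}"

definition orbit2 :: "real \<Rightarrow> real \<Rightarrow> gdual set" where
  "orbit2 \<alpha> \<beta> = {(u, exp t * \<alpha>, exp (- t) * \<beta>, 0) | t u. True}"

definition orbit0 :: "real \<Rightarrow> gdual set" where
  "orbit0 \<tau> = {(\<tau>, 0, 0, 0)}"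

definition coadjoint_orbits :: "gdual set set" where
  "coadjoint_orbits =
     {orbit3 \<rho> lam | \<rho> lam. lam \<noteq> 0} \<union> {orbit2 \<alpha> \<beta> | \<alpha> \<beta>. (\<alpha>, \<beta>) \<noteq> (0, 0)} \<union> range orbit0"

definition orbit_of :: "gdual \<Rightarrow> gdual set" where
  "orbit_of l = (THE Q. Q \<in> coadjoint_orbits \<and> l \<in> Q)"

definition orbit_space :: "gdual set topology" where
  "orbit_space = quotient_topology euclidean orbit_of"

definition Gamma3 :: "gdual set set" where
  "Gamma3 = {orbit3 \<rho> lam | \<rho> lam. lam \<noteq> 0}"

definition Gamma2es :: "real \<Rightarrow> real \<Rightarrow> gdual set set" where
  "Gamma2es \<epsilon> \<sigma> = {orbit2 (\<epsilon> * \<rho>) \<sigma> | \<rho>. \<rho> > 0}"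

definition Gamma2 :: "gdual set set" where
  "Gamma2 = (\<Union>\<epsilon>\<in>{1, -1}. \<Union>\<sigma>\<in>{1, -1}. Gamma2es \<epsilon> \<sigma>)"

definition Gamma1 :: "gdual set set" where
  "Gamma1 = {orbit2 1 0, orbit2 (-1) 0, orbit2 0 1, orbit2 0 (-1)}"

definition Gamma0 :: "gdual set set" where
  "Gamma0 = range orbit0"

end

theory Submission
  imports Defs
begin


definition orb :: "gdual \<Rightarrow> gdual set" where
  "orb p = (case p of (a,b,c,d) \<Rightarrow> if d \<noteq> 0 then orbit3 (a - b*c/d) d
      else if b \<noteq> 0 \<or> c \<noteq> 0 then orbit2 b c else orbit0 a)"

lemma mem_orbit3: "lam \<noteq> 0 \<Longrightarrow> (a',b',c',d') \<in> orbit3 \<rho> lam \<longleftrightarrow> d' = lam \<and> a' - b'*c'/lam = \<rho>"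
  unfolding orbit3_def by (auto simp: field_simps)

lemma mem_orbit2: "(a',b',c',d') \<in> orbit2 \<alpha> \<beta> \<longleftrightarrow> d' = 0 \<and> (\<exists>t. b' = exp t * \<alpha> \<and> c' = exp (-t) * \<beta>)"
  unfolding orbit2_def by auto

lemma orbit2_shift: "orbit2 (exp t * \<alpha>) (exp (-t) * \<beta>) = orbit2 \<alpha> \<beta>"
proof -
  have "(\<exists>s. b' = exp s * (exp t * \<alpha>) \<and> c' = exp (-s) * (exp (-t) * \<beta>)) \<longleftrightarrow>
        (\<exists>s. b' = exp s * \<alpha> \<and> c' = exp (-s) * \<beta>)" for b' c'
  proof
    assume "\<exists>s. b' = exp s * (exp t * \<alpha>) \<and> c' = exp (-s) * (exp (-t) * \<beta>)"
    then obtain s where "b' = exp s * (exp t * \<alpha>)" "c' = exp (-s) * (exp (-t) * \<beta>)" by blast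
    then show "\<exists>s. b' = exp s * \<alpha> \<and> c' = exp (-s) * \<beta>"
      by (intro exI[of _ "s+t"]) (simp add: exp_add exp_diff exp_minus field_simps)
  next
    assume "\<exists>s. b' = exp s * \<alpha> \<and> c' = exp (-s) * \<beta>"
    then obtain s where "b' = exp s * \<alpha>" "c' = exp (-s) * \<beta>" by blast
    then show "\<exists>s. b' = exp s * (exp t * \<alpha>) \<and> c' = exp (-s) * (exp (-t) * \<beta>)"
      by (intro exI[of _ "s-t"]) (simp add: exp_add exp_diff exp_minus field_simps)
  qed
  then show ?thesis by (auto simp: mem_orbit2)
qed

lemma in_orb: "p \<in> orb p"
  by (cases p) (auto simp: orb_def mem_orbit3 mem_orbit2 orbit0_def intro: exI[of _ 0])

lemma orb_co: "orb p \<in> coadjoint_orbits"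
  by (cases p) (auto simp: orb_def coadjoint_orbits_def)

lemma orb_unique: assumes "Q \<in> coadjoint_orbits" "p \<in> Q" shows "Q = orb p"
proof -
  consider (three) \<rho> lam where "lam \<noteq> 0" "Q = orbit3 \<rho> lam"
    | (two) \<alpha> \<beta> where "(\<alpha>,\<beta>) \<noteq> (0,0)" "Q = orbit2 \<alpha> \<beta>"
    | (zero) \<tau> where "Q = orbit0 \<tau>"
    using assms(1) unfolding coadjoint_orbits_def by blast
  then show ?thesis
  proof cases
    case three
    then obtain x y where p: "p = ((\<rho> * lam + x * y) / lam, x, y, lam)"
      using assms(2) unfolding orbit3_def by auto
    have "(\<rho> * lam + x * y) / lam - x*y/lam = \<rho>" using three(1) by (simp add: field_simps)
    then show ?thesis using three p by (simp add: orb_def)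
  next
    case two
    then obtain t u where p: "p = (u, exp t * \<alpha>, exp (-t) * \<beta>, 0)"
      using assms(2) unfolding orbit2_def by auto
    have "exp t * \<alpha> \<noteq> 0 \<or> exp (-t) * \<beta> \<noteq> 0" using two(1) by auto
    then show ?thesis using two p by (simp add: orb_def orbit2_shift)
  next
    case zero
    then show ?thesis using assms(2) by (auto simp: orbit0_def orb_def)
  qed
qed

lemma orbit_of_eq: "orbit_of p = orb p"
  unfolding orbit_of_def
  by (rule the_equality) (auto simp: orb_co in_orb orb_unique)

lemma orbit_of_eq_iff: "orbit_of p = orbit_of q \<longleftrightarrow> q \<in> orb p"
  by (metis orbit_of_eq in_orb orb_co orb_unique)

lemma orb_inv:
  assumes "orbit_of (a,b,c,d) = orbit_of (a',b',c',d')"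
  shows "d' = d \<and> (d \<noteq> 0 \<longrightarrow> a' - b'*c'/d = a - b*c/d)
     \<and> (d = 0 \<longrightarrow> b'*c' = b*c \<and> sgn b' = sgn b \<and> sgn c' = sgn c
          \<and> (b = 0 \<and> c = 0 \<longrightarrow> (a',b',c',d') = (a,b,c,d)))"
proof -
  have m: "(a',b',c',d') \<in> orb (a,b,c,d)" using assms orbit_of_eq_iff by blast
  show ?thesis
  proof (cases "d = 0")
    case False then show ?thesis using m by (simp add: orb_def mem_orbit3)
  next
    case d: True
    show ?thesis
    proof (cases "b \<noteq> 0 \<or> c \<noteq> 0")
      case True
      then obtain t where "d' = 0" "b' = exp t * b" "c' = exp (-t) * c"
        using m d by (auto simp: orb_def mem_orbit2)
      moreover have "exp t * b * (exp (-t) * c) = b * c" by (simp add: exp_minus field_simps)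
      ultimately show ?thesis using d True by (auto simp: sgn_mult)
    next
      case False then show ?thesis using m d by (auto simp: orb_def orbit0_def)
    qed
  qed
qed



definition sat :: "gdual set \<Rightarrow> bool" where
  "sat S \<longleftrightarrow> (\<forall>p q. orbit_of p = orbit_of q \<longrightarrow> p \<in> S \<longrightarrow> q \<in> S)"

definition pb :: "gdual \<Rightarrow> real" where "pb p = fst (snd p)"
definition pc :: "gdual \<Rightarrow> real" where "pc p = fst (snd (snd p))"
definition pd :: "gdual \<Rightarrow> real" where "pd p = snd (snd (snd p))"

lemma proj_simps[simp]: "pb (a,b,c,d) = b" "pc (a,b,c,d) = c" "pd (a,b,c,d) = d"
  by (simp_all add: pb_def pc_def pd_def)

lemma cont_proj[continuous_intros]:
  "continuous_on S pb" "continuous_on S pc" "continuous_on S pd"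
  unfolding pb_def pc_def pd_def by (intro continuous_intros)+

lemma sat_mem: "sat S \<Longrightarrow> orbit_of q \<in> orbit_of ` S \<longleftrightarrow> q \<in> S"
  unfolding sat_def by (metis image_eqI imageE)

lemma openin_orbit_space:
  assumes "open S" "sat S" shows "openin orbit_space (orbit_of ` S)"
proof -
  have "{x \<in> topspace euclidean. orbit_of x \<in> orbit_of ` S} = S"
    using sat_mem[OF assms(2)] by auto
  then show ?thesis unfolding orbit_space_def openin_quotient_topology
    using assms(1) by auto
qed

lemma topspace_orbit_space: "topspace orbit_space = range orbit_of"
proof
  show "topspace orbit_space \<subseteq> range orbit_of"
    unfolding topspace_def orbit_space_def openin_quotient_topology by auto
  have "sat UNIV" by (simp add: sat_def)
  then have "openin orbit_space (range orbit_of)" using openin_orbit_space[of UNIV] by simp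
  then show "range orbit_of \<subseteq> topspace orbit_space" by (rule openin_subset)
qed

lemma hs:
  assumes "\<Gamma> \<subseteq> range orbit_of"
    and "\<And>Q1 Q2. Q1 \<in> \<Gamma> \<Longrightarrow> Q2 \<in> \<Gamma> \<Longrightarrow> Q1 \<noteq> Q2 \<Longrightarrow> \<exists>S1 S2. open S1 \<and> open S2 \<and> sat S1 \<and> sat S2
        \<and> Q1 \<in> orbit_of ` S1 \<and> Q2 \<in> orbit_of ` S2 \<and> (\<forall>x\<in>S1 \<inter> S2. orbit_of x \<notin> \<Gamma>)"
  shows "Hausdorff_space (subtopology orbit_space \<Gamma>)"
  unfolding Hausdorff_space_def
proof (intro allI impI)
  fix Q1 Q2 assume "Q1 \<in> topspace (subtopology orbit_space \<Gamma>) \<and> Q2 \<in> topspace (subtopology orbit_space \<Gamma>) \<and> Q1 \<noteq> Q2"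
  then have h: "Q1 \<in> \<Gamma>" "Q2 \<in> \<Gamma>" "Q1 \<noteq> Q2" by auto
  obtain S1 S2 where S: "open S1" "open S2" "sat S1" "sat S2" "Q1 \<in> orbit_of ` S1" "Q2 \<in> orbit_of ` S2"
    "\<forall>x\<in>S1 \<inter> S2. orbit_of x \<notin> \<Gamma>" using assms(2)[OF h] by blast
  have d: "disjnt (orbit_of ` S1 \<inter> \<Gamma>) (orbit_of ` S2 \<inter> \<Gamma>)"
  proof -
    { fix Q assume Q: "Q \<in> orbit_of ` S1" "Q \<in> orbit_of ` S2" "Q \<in> \<Gamma>"
      then obtain x where x: "x \<in> S2" "Q = orbit_of x" by auto
      then have "x \<in> S1" using Q(1) sat_mem[OF S(3)] by blast
      then have False using x Q S(7) by blast }
    then show ?thesis unfolding disjnt_def by blast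
  qed
  show "\<exists>U V. openin (subtopology orbit_space \<Gamma>) U \<and> openin (subtopology orbit_space \<Gamma>) V \<and>
      Q1 \<in> U \<and> Q2 \<in> V \<and> disjnt U V"
    apply (rule exI[of _ "orbit_of ` S1 \<inter> \<Gamma>"], rule exI[of _ "orbit_of ` S2 \<inter> \<Gamma>"])
    using S h d by (auto intro!: openin_subtopology_Int openin_orbit_space)
qed

lemma orbit_of_3: "lam \<noteq> 0 \<Longrightarrow> orbit3 \<rho> lam = orbit_of (\<rho>, 0, 0, lam)"
  by (simp add: orbit_of_eq orb_def)

lemma orbit_of_2: "\<alpha> \<noteq> 0 \<or> \<beta> \<noteq> 0 \<Longrightarrow> orbit2 \<alpha> \<beta> = orbit_of (0, \<alpha>, \<beta>, 0)"
  by (auto simp: orbit_of_eq orb_def)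

lemma orbit_of_0: "orbit0 \<tau> = orbit_of (\<tau>, 0, 0, 0)"
  by (simp add: orbit_of_eq orb_def)

lemma orbit_of_d: "pd x \<noteq> 0 \<Longrightarrow> orbit_of x \<noteq> orbit2 \<alpha> \<beta>"
  using in_orb[of x] by (cases x) (auto simp: orbit_of_eq mem_orbit2)

lemma part3: "Hausdorff_space (subtopology orbit_space Gamma3)"
proof (rule hs)
  show "Gamma3 \<subseteq> range orbit_of" unfolding Gamma3_def using orbit_of_3 by auto
next
  fix Q1 Q2 assume "Q1 \<in> Gamma3" "Q2 \<in> Gamma3" "Q1 \<noteq> Q2"
  then obtain r1 l1 r2 l2 where Q: "Q1 = orbit3 r1 l1" "Q2 = orbit3 r2 l2" "l1 \<noteq> 0" "l2 \<noteq> 0"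
    unfolding Gamma3_def by auto
  with \<open>Q1 \<noteq> Q2\<close> have "(l1, r1) \<noteq> (l2, r2)" by auto
  then obtain B1 B2 where B: "open B1" "open B2" "(l1, r1) \<in> B1" "(l2, r2) \<in> B2" "B1 \<inter> B2 = {}"
    using separation_t2[of "(l1,r1)" "(l2,r2)"] by blast
  define W where "W = {p. pd p \<noteq> 0}"
  define g where "g = (\<lambda>p. (pd p, fst p - pb p * pc p / pd p))"
  have oW: "open W" unfolding W_def by (intro open_Collect_neq continuous_intros)
  have cg: "continuous_on W g" unfolding g_def W_def by (intro continuous_intros) auto
  have oS: "open (g -` B \<inter> W)" if "open B" for B using continuous_on_open_vimage[OF oW] cg that by blast
  have sS: "sat (g -` B \<inter> W)" for B
    unfolding sat_def
  proof (intro allI impI)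
    fix p q assume pq: "orbit_of p = orbit_of q" "p \<in> g -` B \<inter> W"
    obtain a b c d where p: "p = (a,b,c,d)" by (cases p)
    obtain a' b' c' d' where q: "q = (a',b',c',d')" by (cases q)
    show "q \<in> g -` B \<inter> W" using orb_inv[of a b c d a' b' c' d'] pq unfolding p q g_def W_def by auto
  qed
  show "\<exists>S1 S2. open S1 \<and> open S2 \<and> sat S1 \<and> sat S2 \<and> Q1 \<in> orbit_of ` S1 \<and> Q2 \<in> orbit_of ` S2
     \<and> (\<forall>x\<in>S1 \<inter> S2. orbit_of x \<notin> Gamma3)"
    apply (rule exI[of _ "g -` B1 \<inter> W"], rule exI[of _ "g -` B2 \<inter> W"])
  proof (intro conjI ballI)
    show "Q1 \<in> orbit_of ` (g -` B1 \<inter> W)" using B(3) Q orbit_of_3[of l1 r1]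
      by (intro image_eqI[of _ _ "(r1,0,0,l1)"]) (auto simp: g_def W_def)
    show "Q2 \<in> orbit_of ` (g -` B2 \<inter> W)" using B(4) Q orbit_of_3[of l2 r2]
      by (intro image_eqI[of _ _ "(r2,0,0,l2)"]) (auto simp: g_def W_def)
    fix x assume "x \<in> (g -` B1 \<inter> W) \<inter> (g -` B2 \<inter> W)"
    then show "orbit_of x \<notin> Gamma3" using B(5) by auto
  qed (auto simp: oS B sS)
qed



lemma pm1: "e \<in> {1, -1::real} \<Longrightarrow> e \<noteq> 0 \<and> e * e = 1" by auto

lemma part2h: assumes "\<epsilon> \<in> {1, -1::real}" "\<sigma> \<in> {1, -1::real}"
  shows "Hausdorff_space (subtopology orbit_space (Gamma2es \<epsilon> \<sigma>))"
proof (rule hs)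
  have "\<sigma> \<noteq> 0" using assms by auto
  then show "Gamma2es \<epsilon> \<sigma> \<subseteq> range orbit_of" unfolding Gamma2es_def using orbit_of_2 by auto
next
  fix Q1 Q2 assume "Q1 \<in> Gamma2es \<epsilon> \<sigma>" "Q2 \<in> Gamma2es \<epsilon> \<sigma>" "Q1 \<noteq> Q2"
  then obtain r1 r2 where Q: "Q1 = orbit2 (\<epsilon> * r1) \<sigma>" "Q2 = orbit2 (\<epsilon> * r2) \<sigma>" "r1 > 0" "r2 > 0"
    unfolding Gamma2es_def by auto
  with \<open>Q1 \<noteq> Q2\<close> have "r1 \<noteq> r2" by auto
  have e: "\<epsilon> \<noteq> 0" "\<sigma> \<noteq> 0" using assms by auto
  have "\<epsilon> * r1 * \<sigma> \<noteq> \<epsilon> * r2 * \<sigma>" using \<open>r1 \<noteq> r2\<close> e by simp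
  then obtain J1 J2 where J: "open J1" "open J2" "\<epsilon> * r1 * \<sigma> \<in> J1" "\<epsilon> * r2 * \<sigma> \<in> J2" "J1 \<inter> J2 = {}"
    using separation_t2[of "\<epsilon> * r1 * \<sigma>" "\<epsilon> * r2 * \<sigma>"] by blast
  define S where "S = (\<lambda>J. {p. pd p \<noteq> 0} \<union> (\<lambda>p. pb p * pc p) -` J)"
  have oS: "open (S J)" if "open J" for J unfolding S_def
    by (intro open_Un open_Collect_neq open_vimage that continuous_intros)
  have sS: "sat (S J)" for J
    unfolding sat_def
  proof (intro allI impI)
    fix p q assume pq: "orbit_of p = orbit_of q" "p \<in> S J"
    obtain a b c d where p: "p = (a,b,c,d)" by (cases p)
    obtain a' b' c' d' where q: "q = (a',b',c',d')" by (cases q)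
    show "q \<in> S J" using orb_inv[of a b c d a' b' c' d'] pq unfolding p q S_def by auto
  qed
  have o1: "Q1 = orbit_of (0, \<epsilon> * r1, \<sigma>, 0)" using Q orbit_of_2 e by auto
  have o2: "Q2 = orbit_of (0, \<epsilon> * r2, \<sigma>, 0)" using Q orbit_of_2 e by auto
  show "\<exists>S1 S2. open S1 \<and> open S2 \<and> sat S1 \<and> sat S2 \<and> Q1 \<in> orbit_of ` S1 \<and> Q2 \<in> orbit_of ` S2
     \<and> (\<forall>x\<in>S1 \<inter> S2. orbit_of x \<notin> Gamma2es \<epsilon> \<sigma>)"
    apply (rule exI[of _ "S J1"], rule exI[of _ "S J2"])
  proof (intro conjI ballI)
    show "Q1 \<in> orbit_of ` S J1" unfolding o1 using J(3)
      by (intro imageI) (simp add: S_def)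
    show "Q2 \<in> orbit_of ` S J2" unfolding o2 using J(4)
      by (intro imageI) (simp add: S_def)
    fix x assume x: "x \<in> S J1 \<inter> S J2"
    show "orbit_of x \<notin> Gamma2es \<epsilon> \<sigma>"
    proof (cases "pd x = 0")
      case True then show ?thesis using x J(5) by (auto simp: S_def)
    next
      case False then show ?thesis using orbit_of_d[OF False] by (auto simp: Gamma2es_def)
    qed
  qed (auto simp: oS J sS)
qed

lemma part2o: assumes "\<epsilon> \<in> {1, -1::real}" "\<sigma> \<in> {1, -1::real}"
  shows "openin (subtopology orbit_space Gamma2) (Gamma2es \<epsilon> \<sigma>)"
proof -
  define S where "S = {p. pd p \<noteq> 0} \<union> ({p. 0 < \<epsilon> * pb p} \<inter> {p. 0 < \<sigma> * pc p})"
  have oS: "open S" unfolding S_def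
    by (intro open_Un open_Int open_Collect_neq open_Collect_less continuous_intros)
  have sS: "sat S"
    unfolding sat_def
  proof (intro allI impI)
    fix p q assume pq: "orbit_of p = orbit_of q" "p \<in> S"
    obtain a b c d where p: "p = (a,b,c,d)" by (cases p)
    obtain a' b' c' d' where q: "q = (a',b',c',d')" by (cases q)
    have i: "d' = d" "d = 0 \<longrightarrow> sgn b' = sgn b \<and> sgn c' = sgn c"
      using orb_inv[of a b c d a' b' c' d'] pq unfolding p q by auto
    have "0 < \<epsilon> * b' \<longleftrightarrow> 0 < \<epsilon> * b" if "sgn b' = sgn b"
      using that assms(1) by (auto simp: sgn_if split: if_splits)
    moreover have "0 < \<sigma> * c' \<longleftrightarrow> 0 < \<sigma> * c" if "sgn c' = sgn c"
      using that assms(2) by (auto simp: sgn_if split: if_splits)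
    ultimately show "q \<in> S" using i pq(2) unfolding p q S_def by auto
  qed
  have "Gamma2es \<epsilon> \<sigma> = orbit_of ` S \<inter> Gamma2"
  proof
    show "Gamma2es \<epsilon> \<sigma> \<subseteq> orbit_of ` S \<inter> Gamma2"
    proof
      fix Q assume "Q \<in> Gamma2es \<epsilon> \<sigma>"
      then obtain r where r: "Q = orbit2 (\<epsilon> * r) \<sigma>" "r > 0" unfolding Gamma2es_def by auto
      have "\<sigma> \<noteq> 0" using assms by auto
      then have "Q = orbit_of (0, \<epsilon> * r, \<sigma>, 0)" using r orbit_of_2 by auto
      moreover have "(0, \<epsilon> * r, \<sigma>, 0) \<in> S"
        using assms r(2) by (auto simp: S_def)
      moreover have "Q \<in> Gamma2" using \<open>Q \<in> Gamma2es \<epsilon> \<sigma>\<close> assms unfolding Gamma2_def by auto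
      ultimately show "Q \<in> orbit_of ` S \<inter> Gamma2" by auto
    qed
  next
    show "orbit_of ` S \<inter> Gamma2 \<subseteq> Gamma2es \<epsilon> \<sigma>"
    proof
      fix Q assume Q: "Q \<in> orbit_of ` S \<inter> Gamma2"
      then have "Q \<in> Gamma2" by blast
      then obtain e s r where es: "e \<in> {1, -1}" "s \<in> {1, -1}" "Q = orbit2 (e * r) s" "r > 0"
        unfolding Gamma2_def Gamma2es_def by blast
      then have "Q = orbit_of (0, e * r, s, 0)" using orbit_of_2 by auto
      then have "(0, e * r, s, 0) \<in> S" using Q sat_mem[OF sS] by auto
      then have "0 < \<epsilon> * (e * r)" "0 < \<sigma> * s" by (auto simp: S_def)
      then have "e = \<epsilon>" "s = \<sigma>" using es assms \<open>r > 0\<close>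
        by (auto simp: zero_less_mult_iff)
      then show "Q \<in> Gamma2es \<epsilon> \<sigma>" using es unfolding Gamma2es_def by auto
    qed
  qed
  then show ?thesis using openin_orbit_space[OF oS sS] openin_subtopology by blast
qed



lemma single_open:
  assumes "open S" "sat S" "Q = orbit_of q" "q \<in> S" "Q \<in> \<Gamma>"
    and "\<And>Q'. Q' \<in> \<Gamma> \<Longrightarrow> Q' \<noteq> Q \<Longrightarrow> \<exists>q'. Q' = orbit_of q' \<and> q' \<notin> S"
  shows "openin (subtopology orbit_space \<Gamma>) {Q}"
proof -
  have "Q' = Q" if Q': "Q' \<in> orbit_of ` S" "Q' \<in> \<Gamma>" for Q'
  proof (rule ccontr)
    assume "Q' \<noteq> Q"
    then obtain q' where q': "Q' = orbit_of q'" "q' \<notin> S" using assms(6)[OF Q'(2)] by blast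
    then have "q' \<in> S" using Q'(1) sat_mem[OF assms(2), of q'] by simp
    then show False using q'(2) by simp
  qed
  moreover have "Q \<in> orbit_of ` S" using assms(3,4) by simp
  ultimately have "{Q} = orbit_of ` S \<inter> \<Gamma>" using assms(5) by blast
  then show ?thesis using openin_subtopology_Int[OF openin_orbit_space[OF assms(1,2)], of \<Gamma>] by simp
qed

lemma sat_sign:
  assumes "\<And>b c b' c'. sgn b' = sgn b \<Longrightarrow> sgn c' = sgn c \<Longrightarrow> P b c \<Longrightarrow> P b' c'"
  shows "sat ({p. pd p \<noteq> 0} \<union> {p. P (pb p) (pc p)})"
  unfolding sat_def
proof (intro allI impI)
  fix p q assume pq: "orbit_of p = orbit_of q" "p \<in> {p. pd p \<noteq> 0} \<union> {p. P (pb p) (pc p)}"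
  obtain a b c d where p: "p = (a,b,c,d)" by (cases p)
  obtain a' b' c' d' where q: "q = (a',b',c',d')" by (cases q)
  have i: "d' = d" "d = 0 \<longrightarrow> sgn b' = sgn b \<and> sgn c' = sgn c"
    using orb_inv[of a b c d a' b' c' d'] pq unfolding p q by auto
  show "q \<in> {p. pd p \<noteq> 0} \<union> {p. P (pb p) (pc p)}"
  proof (cases "d = 0")
    case False then show ?thesis using i unfolding q by simp
  next
    case True
    then have "P b c" using pq(2) unfolding p by simp
    then have "P b' c'" using assms[of b' b c' c] i True by blast
    then show ?thesis unfolding q by simp
  qed
qed

lemma G1: "Gamma1 = {orbit_of (0,1,0,0), orbit_of (0,-1,0,0), orbit_of (0,0,1,0), orbit_of (0,0,-1,0)}"
  unfolding Gamma1_def using orbit_of_2[of 1 0] orbit_of_2[of "-1" 0] orbit_of_2[of 0 1] orbit_of_2[of 0 "-1"] by simp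

lemma G1': "Gamma1 = orbit_of ` {(0,1,0,0), (0,-1,0,0), (0,0,1,0), (0,0,-1,0)}"
  unfolding G1 by simp

lemma other: assumes "Q' \<in> orbit_of ` X" "\<forall>x\<in>X. x \<notin> S \<or> orbit_of x = Q" "Q' \<noteq> Q"
  shows "\<exists>q'. Q' = orbit_of q' \<and> q' \<notin> S"
  using assms by blast

lemma G1_open:
  assumes "open S" "sat S" "q \<in> {(0,1,0,0), (0,-1,0,0), (0,0,1,0), (0,0,-1,0)}" "q \<in> S"
    "\<forall>x\<in>{(0,1,0,0), (0,-1,0,0), (0,0,1,0), (0,0,-1,0)}. x \<notin> S \<or> orbit_of x = orbit_of q"
  shows "openin (subtopology orbit_space Gamma1) {orbit_of q}"
proof (rule single_open[OF assms(1,2) refl assms(4)])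
  show "orbit_of q \<in> Gamma1" unfolding G1' using assms(3) by blast
  fix Q' assume "Q' \<in> Gamma1" "Q' \<noteq> orbit_of q"
  then show "\<exists>q'. Q' = orbit_of q' \<and> q' \<notin> S" using other[OF _ assms(5)] unfolding G1' by blast
qed

lemma part1: "subtopology orbit_space Gamma1 = discrete_topology Gamma1"
proof -
  have top: "topspace (subtopology orbit_space Gamma1) = Gamma1"
    unfolding topspace_subtopology topspace_orbit_space G1 by auto
  have oS: "open ({p. pd p \<noteq> 0} \<union> {p. P (pb p) (pc p)})"
    if "open {p. P (pb p) (pc p)}" for P
    using that by (intro open_Un open_Collect_neq continuous_intros)
  have o1: "open {p. 0 < pb p}" "open {p. pb p < 0}" "open {p. 0 < pc p}" "open {p. pc p < 0}"
    by (intro open_Collect_less continuous_intros)+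
  have s1: "sat ({p. pd p \<noteq> 0} \<union> {p. 0 < pb p})" by (rule sat_sign) (auto simp: sgn_if split: if_splits)
  have s2: "sat ({p. pd p \<noteq> 0} \<union> {p. pb p < 0})" by (rule sat_sign) (auto simp: sgn_if split: if_splits)
  have s3: "sat ({p. pd p \<noteq> 0} \<union> {p. 0 < pc p})" by (rule sat_sign) (auto simp: sgn_if split: if_splits)
  have s4: "sat ({p. pd p \<noteq> 0} \<union> {p. pc p < 0})" by (rule sat_sign) (auto simp: sgn_if split: if_splits)
  have "\<forall>Q\<in>Gamma1. openin (subtopology orbit_space Gamma1) {Q}"
  proof
    fix Q assume "Q \<in> Gamma1"
    then consider "Q = orbit_of (0,1,0,0)" | "Q = orbit_of (0,-1,0,0)" | "Q = orbit_of (0,0,1,0)"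
      | "Q = orbit_of (0,0,-1,0)" unfolding G1 by blast
    then show "openin (subtopology orbit_space Gamma1) {Q}"
    proof cases
      case 1 show ?thesis
        unfolding 1 by (rule G1_open[OF oS[OF o1(1)] s1]) simp_all
    next
      case 2 show ?thesis
        unfolding 2 by (rule G1_open[OF oS[OF o1(2)] s2]) simp_all
    next
      case 3 show ?thesis
        unfolding 3 by (rule G1_open[OF oS[OF o1(3)] s3]) simp_all
    next
      case 4 show ?thesis
        unfolding 4 by (rule G1_open[OF oS[OF o1(4)] s4]) simp_all
    qed
  qed
  then show ?thesis using top discrete_topology_unique[of Gamma1 "subtopology orbit_space Gamma1"] by auto
qed

lemma part0: "homeomorphic_map euclideanreal (subtopology orbit_space Gamma0) orbit0"
proof (rule bijective_open_imp_homeomorphic_map)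
  have G0: "Gamma0 \<subseteq> range orbit_of" unfolding Gamma0_def using orbit_of_0 by auto
  have cm: "continuous_map euclideanreal orbit_space orbit0"
    unfolding continuous_map
  proof (intro conjI allI impI)
    show "orbit0 ` topspace euclideanreal \<subseteq> topspace orbit_space"
      using G0 unfolding topspace_orbit_space Gamma0_def by auto
    fix U assume "openin orbit_space U"
    then have "open {x. orbit_of x \<in> U}"
      unfolding orbit_space_def openin_quotient_topology by auto
    then have "open ((\<lambda>t::real. (t, 0::real, 0::real, 0::real)) -` {x. orbit_of x \<in> U})"
      by (intro open_vimage continuous_intros)
    moreover have "(\<lambda>t::real. (t, 0::real, 0::real, 0::real)) -` {x. orbit_of x \<in> U} = {x \<in> topspace euclideanreal. orbit0 x \<in> U}"
      using orbit_of_0 by auto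
    ultimately show "openin euclideanreal {x \<in> topspace euclideanreal. orbit0 x \<in> U}" by simp
  qed
  then show "continuous_map euclideanreal (subtopology orbit_space Gamma0) orbit0"
    unfolding continuous_map_in_subtopology Gamma0_def by auto
  show "orbit0 ` topspace euclideanreal = topspace (subtopology orbit_space Gamma0)"
    using G0 unfolding topspace_orbit_space Gamma0_def topspace_subtopology by auto
  show "inj_on orbit0 (topspace euclideanreal)" unfolding inj_on_def orbit0_def by auto
  show "open_map euclideanreal (subtopology orbit_space Gamma0) orbit0"
    unfolding open_map_def
  proof (intro allI impI)
    fix V assume "openin euclideanreal V"
    then have oV: "open V" by simp
    define S where "S = {p. pd p \<noteq> 0} \<union> {p. pb p \<noteq> 0} \<union> {p. pc p \<noteq> 0} \<union> fst -` V"
    have oS: "open S" unfolding S_def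
      by (intro open_Un open_Collect_neq open_vimage_fst oV continuous_intros)
    have sS: "sat S"
      unfolding sat_def
    proof (intro allI impI)
      fix p q assume pq: "orbit_of p = orbit_of q" "p \<in> S"
      obtain a b c d where p: "p = (a,b,c,d)" by (cases p)
      obtain a' b' c' d' where q: "q = (a',b',c',d')" by (cases q)
      have i: "d' = d" "d = 0 \<longrightarrow> sgn b' = sgn b \<and> sgn c' = sgn c \<and> (b = 0 \<and> c = 0 \<longrightarrow> (a',b',c',d') = (a,b,c,d))"
        using orb_inv[of a b c d a' b' c' d'] pq unfolding p q by auto
      show "q \<in> S"
      proof (cases "d = 0 \<and> b = 0 \<and> c = 0")
        case True
        then have "(a',b',c',d') = (a,b,c,d)" using i by blast
        then show ?thesis using pq(2) unfolding p q by simp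
      next
        case False
        then have "d \<noteq> 0 \<or> b \<noteq> 0 \<or> c \<noteq> 0" by blast
        then have "d' \<noteq> 0 \<or> b' \<noteq> 0 \<or> c' \<noteq> 0" using i by (auto simp: sgn_0_0)
        then show ?thesis unfolding q S_def by auto
      qed
    qed
    have "orbit0 ` V = orbit_of ` S \<inter> Gamma0"
    proof
      show "orbit0 ` V \<subseteq> orbit_of ` S \<inter> Gamma0"
      proof
        fix Q assume "Q \<in> orbit0 ` V"
        then obtain t where t: "t \<in> V" "Q = orbit0 t" by auto
        then have "(t,0,0,0) \<in> S" by (simp add: S_def)
        then have "Q \<in> orbit_of ` S" using t orbit_of_0[of t] by simp
        moreover have "Q \<in> Gamma0" using t unfolding Gamma0_def by simp
        ultimately show "Q \<in> orbit_of ` S \<inter> Gamma0" by blast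
      qed
      show "orbit_of ` S \<inter> Gamma0 \<subseteq> orbit0 ` V"
      proof
        fix Q assume Q: "Q \<in> orbit_of ` S \<inter> Gamma0"
        then obtain t where t: "Q = orbit0 t" unfolding Gamma0_def by auto
        then have "orbit_of (t,0,0,0) \<in> orbit_of ` S" using Q orbit_of_0[of t] by simp
        then have "(t,0,0,0) \<in> S" using sat_mem[OF sS] by blast
        then have "t \<in> V" by (simp add: S_def)
        then show "Q \<in> orbit0 ` V" using t by simp
      qed
    qed
    then show "openin (subtopology orbit_space Gamma0) (orbit0 ` V)"
      using openin_subtopology_Int[OF openin_orbit_space[OF oS sS], of Gamma0] by simp
  qed
qed

theorem proposition2p2:
  shows "Hausdorff_space (subtopology orbit_space Gamma3)
    \<and> (\<forall>\<epsilon>\<in>{1, -1::real}. \<forall>\<sigma>\<in>{1, -1::real}.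
          openin (subtopology orbit_space Gamma2) (Gamma2es \<epsilon> \<sigma>)
          \<and> Hausdorff_space (subtopology orbit_space (Gamma2es \<epsilon> \<sigma>)))
    \<and> subtopology orbit_space Gamma1 = discrete_topology Gamma1
    \<and> homeomorphic_map euclideanreal (subtopology orbit_space Gamma0) orbit0"
  using part3 part2o part2h part1 part0 by simp


end
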